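(* For every admissible word $\omega$, $V_\omega=B_\omega\cap Z_\omega=\mathbb{Z}\{\delta^j_\omega: j\in X(\omega)\}$.
   Context: Let $[n]=\{1,\dots,n\}$, $e_1,\dots,e_n$ the standard basis of $\mathbb{Z}^n$. The alphabet is $L=\{1,\dots,n,1^\infty,\dots,n^\infty,\mathsf{ext}\}$ (each $j^\infty$ and $\mathsf{ext}$ is a single letter); $\varepsilon$ is the empty word, $*$ concatenation. A finite word $\omega$ over $L$ is admissible if: (i) whenever $j^\infty$ occurs, the subsequent part of $\omega$ contains neither $j$ nor $j^\infty$; (ii) the only letter allowed directly after $j^\infty$ is $\mathsf{ext}$; (iii) every $\mathsf{ext}$ occurs directly after some $j^\infty$. $X(\omega)$ is the set of $j$ such that $j^\infty\mathsf{ext}$ is a subword of $\omega$, and $Y(\omega)=[n]\setminus X(\omega)$. Define recursively $\delta^i_\omega\in\mathbb{Z}^n$: $\delta^i_\varepsilon=e_i$; $\delta^i_{\omega*j^\infty}=\delta^i_{\omega*\mathsf{ext}}=\delta^i_\omega$; $\delta^i_{\omega*j}=\delta^i_\omega$ if $i\in X(\omega)\cup\{j\}$ and $\delta^i_{\omega*j}=\delta^i_\omega-\delta^j_\omega$ if $i\in Y(\omega)\setminus\{j\}$. Define (Minkowski sums) $B_\varepsilon=\{0\}$, $B_{\omega*j}=B_\omega+\{0,\delta^j_\omega\}$, $B_{\omega*j^\infty}=B_\omega+\mathbb{Z}_{\ge0}\delta^j_\omega$, $B_{\omega*j^\infty*\mathsf{ext}}=B_\omega+\mathbb{Z}\delta^j_\omega$,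 and $Z_\omega=-B_\omega$. Define $V_\varepsilon=\{0\}$, $V_{\omega*j}=V_{\omega*j^\infty}=V_\omega$, $V_{\omega*j^\infty*\mathsf{ext}}=V_\omega+\mathbb{Z}\delta^j_\omega$. *)

theory Defs
  imports Main "HOL-Library.Function_Algebras"
begin

text \<open>Letters of the alphabet L: Fin j is the letter j, Inf j is j^infinity, Ext is ext.
Vectors of Z^n are represented as functions nat => int (coordinates 1..n);
all vectors arising here are supported on {1..n}.\<close>

datatype letter = Fin nat | Inf nat | Ext

type_synonym vec = "nat \<Rightarrow> int"

definition unitv :: "nat \<Rightarrow> vec" where
  "unitv i = (\<lambda>k. if k = i then 1 else 0)"

definition msum :: "vec set \<Rightarrow> vec set \<Rightarrow> vec set" where
  "msum A C = {a + c | a c. a \<in> A \<and> c \<in> C}"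

definition letter_ok :: "nat \<Rightarrow> letter \<Rightarrow> bool" where
  "letter_ok n l = (case l of Fin j \<Rightarrow> j \<in> {1..n} | Inf j \<Rightarrow> j \<in> {1..n} | Ext \<Rightarrow> True)"

definition admissible :: "nat \<Rightarrow> letter list \<Rightarrow> bool" where
  "admissible n w \<longleftrightarrow>
     (\<forall>l\<in>set w. letter_ok n l) \<and>
     (\<forall>p q j. p < q \<and> q < length w \<and> w ! p = Inf j \<longrightarrow> w ! q \<noteq> Fin j \<and> w ! q \<noteq> Inf j) \<and>
     (\<forall>p j. Suc p < length w \<and> w ! p = Inf j \<longrightarrow> w ! Suc p = Ext) \<and>
     (\<forall>p. p < length w \<and> w ! p = Ext \<longrightarrow> 0 < p \<and> (\<exists>j. w ! (p - 1) = Inf j))"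

definition Xw :: "letter list \<Rightarrow> nat set" where
  "Xw w = {j. \<exists>u v. w = u @ [Inf j, Ext] @ v}"

definition Yw :: "nat \<Rightarrow> letter list \<Rightarrow> nat set" where
  "Yw n w = {1..n} - Xw w"

text \<open>Recursions on the word are written on the reversed word (head = last letter).\<close>

fun deltaR :: "nat \<Rightarrow> nat \<Rightarrow> letter list \<Rightarrow> vec" where
  "deltaR n i [] = unitv i"
| "deltaR n i (Inf j # r) = deltaR n i r"
| "deltaR n i (Ext # r) = deltaR n i r"
| "deltaR n i (Fin j # r) =
     (if i \<in> Yw n (rev r) - {j} then deltaR n i r - deltaR n j r else deltaR n i r)"

definition delta :: "nat \<Rightarrow> nat \<Rightarrow> letter list \<Rightarrow> vec" where
  "delta n i w = deltaR n i (rev w)"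

fun BR :: "nat \<Rightarrow> letter list \<Rightarrow> vec set" where
  "BR n [] = {0}"
| "BR n (Fin j # r) = msum (BR n r) {0, deltaR n j r}"
| "BR n (Inf j # r) = msum (BR n r) {of_nat k * deltaR n j r | k. True}"
| "BR n (Ext # Inf j # r) = msum (BR n r) {of_int k * deltaR n j r | k. True}"
| "BR n (Ext # r) = BR n r" \<comment> \<open>does not occur for admissible words\<close>

definition B :: "nat \<Rightarrow> letter list \<Rightarrow> vec set" where
  "B n w = BR n (rev w)"

definition Z :: "nat \<Rightarrow> letter list \<Rightarrow> vec set" where
  "Z n w = uminus ` B n w"

fun VR :: "nat \<Rightarrow> letter list \<Rightarrow> vec set" where
  "VR n [] = {0}"
| "VR n (Fin j # r) = VR n r"
| "VR n (Inf j # r) = VR n r"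
| "VR n (Ext # Inf j # r) = msum (VR n r) {of_int k * deltaR n j r | k. True}"
| "VR n (Ext # r) = VR n r" \<comment> \<open>does not occur for admissible words\<close>

definition V :: "nat \<Rightarrow> letter list \<Rightarrow> vec set" where
  "V n w = VR n (rev w)"

definition spanX :: "nat \<Rightarrow> letter list \<Rightarrow> vec set" where
  "spanX n w = {v. \<exists>c :: nat \<Rightarrow> int. v = (\<lambda>k. \<Sum>j\<in>Xw w. c j * delta n j w k)}"

end

theory Submission imports Defs begin

lemma of_int_fun_apply [simp]: "(of_int k :: 'a \<Rightarrow> 'b::ring_1) x = of_int k"
proof (cases k rule: int_cases)
  case (nonneg m) then show ?thesis by simp
next
  case (neg m) then show ?thesis by (simp del: of_nat_Suc)
qed



lemma finite_Yw [simp]: "finite (Yw n w)"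
  by (rule finite_subset[of _ "{1..n}"]) (auto simp: Yw_def)

lemma Yw_sub: "Yw n w \<subseteq> {1..n}" by (auto simp: Yw_def)

lemma Xw_snoc: "Xw (u @ [a]) = Xw u \<union> {k. a = Ext \<and> u \<noteq> [] \<and> last u = Inf k}"
proof (intro equalityI subsetI)
  fix j assume "j \<in> Xw (u @ [a])"
  then obtain x v where e: "u @ [a] = x @ [Inf j, Ext] @ v" by (auto simp: Xw_def)
  show "j \<in> Xw u \<union> {k. a = Ext \<and> u \<noteq> [] \<and> last u = Inf k}"
  proof (cases v rule: rev_cases)
    case Nil then show ?thesis using e by auto
  next
    case (snoc v' b) then have "u = x @ [Inf j, Ext] @ v'" using e by auto
    then show ?thesis by (auto simp: Xw_def)
  qed
next
  fix j assume "j \<in> Xw u \<union> {k. a = Ext \<and> u \<noteq> [] \<and> last u = Inf k}"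
  then show "j \<in> Xw (u @ [a])"
  proof
    assume "j \<in> Xw u"
    then obtain x v where "u = x @ [Inf j, Ext] @ v" by (auto simp: Xw_def)
    then have "u @ [a] = x @ [Inf j, Ext] @ (v @ [a])" by simp
    then show ?thesis by (auto simp: Xw_def)
  next
    assume h: "j \<in> {k. a = Ext \<and> u \<noteq> [] \<and> last u = Inf k}"
    then have "u = butlast u @ [Inf j]" by (metis (mono_tags) append_butlast_last_id mem_Collect_eq)
    then have "u @ [a] = butlast u @ [Inf j, Ext] @ []" using h by (metis append.assoc append_Cons append_Nil append_Nil2 mem_Collect_eq)
    then show ?thesis unfolding Xw_def by blast
  qed
qed

lemma Xw_Fin [simp]: "Xw (u @ [Fin j]) = Xw u" by (simp add: Xw_snoc)
lemma Xw_Inf [simp]: "Xw (u @ [Inf j]) = Xw u" by (simp add: Xw_snoc)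
lemma Xw_InfExt [simp]: "Xw (u @ [Inf j, Ext]) = insert j (Xw u)"
  using Xw_snoc[of "u @ [Inf j]" Ext] by auto
lemma Xw_Ext_sub: "Xw u \<subseteq> Xw (u @ [Ext])" by (simp add: Xw_snoc)

lemma adm_prefix:
  assumes A: "admissible n (u @ v)" shows "admissible n u"
proof -
  have e: "\<And>i. i < length u \<Longrightarrow> (u @ v) ! i = u ! i" by (simp add: nth_append)
  have a1: "\<forall>l\<in>set (u @ v). letter_ok n l"
    and a2: "\<forall>p q j. p < q \<and> q < length (u @ v) \<and> (u @ v) ! p = Inf j \<longrightarrow> (u @ v) ! q \<noteq> Fin j \<and> (u @ v) ! q \<noteq> Inf j"
    and a3: "\<forall>p j. Suc p < length (u @ v) \<and> (u @ v) ! p = Inf j \<longrightarrow> (u @ v) ! Suc p = Ext"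
    and a4: "\<forall>p. p < length (u @ v) \<and> (u @ v) ! p = Ext \<longrightarrow> 0 < p \<and> (\<exists>j. (u @ v) ! (p - 1) = Inf j)"
    using A unfolding admissible_def by blast+
  have b1: "\<forall>l\<in>set u. letter_ok n l" using a1 by simp
  have b2: "\<forall>p q j. p < q \<and> q < length u \<and> u ! p = Inf j \<longrightarrow> u ! q \<noteq> Fin j \<and> u ! q \<noteq> Inf j"
  proof (intro allI impI)
    fix p q j assume h: "p < q \<and> q < length u \<and> u ! p = Inf j"
    then have "p < length u" by simp
    then show "u ! q \<noteq> Fin j \<and> u ! q \<noteq> Inf j"
      using a2[rule_format, of p q j] h e[of p] e[of q] by simp
  qed
  have b3: "\<forall>p j. Suc p < length u \<and> u ! p = Inf j \<longrightarrow> u ! Suc p = Ext"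
  proof (intro allI impI)
    fix p j assume h: "Suc p < length u \<and> u ! p = Inf j"
    then have "p < length u" by simp
    then show "u ! Suc p = Ext"
      using a3[rule_format, of p j] h e[of p] e[of "Suc p"] by simp
  qed
  have b4: "\<forall>p. p < length u \<and> u ! p = Ext \<longrightarrow> 0 < p \<and> (\<exists>j. u ! (p - 1) = Inf j)"
  proof (intro allI impI)
    fix p assume h: "p < length u \<and> u ! p = Ext"
    then have "p - 1 < length u" by (meson less_imp_diff_less)
    then show "0 < p \<and> (\<exists>j. u ! (p - 1) = Inf j)"
      using a4[rule_format, of p] h e[of p] e[of "p - 1"] by simp
  qed
  show ?thesis unfolding admissible_def using b1 b2 b3 b4 by blast
qed

lemma adm_ok: "admissible n w \<Longrightarrow> l \<in> set w \<Longrightarrow> letter_ok n l"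
  by (auto simp: admissible_def)

lemma Xw_sub: "admissible n w \<Longrightarrow> Xw w \<subseteq> {1..n}"
  by (auto simp: Xw_def admissible_def letter_ok_def)

lemma adm_Fin: "admissible n (u @ [Fin j]) \<Longrightarrow> j \<in> Yw n u"
proof -
  assume a: "admissible n (u @ [Fin j])"
  have "j \<in> {1..n}" using adm_ok[OF a, of "Fin j"] by (simp add: letter_ok_def)
  moreover have "j \<notin> Xw u"
  proof
    assume "j \<in> Xw u"
    then obtain x v where e: "u = x @ [Inf j, Ext] @ v" by (auto simp: Xw_def)
    let ?p = "length x" and ?q = "length u"
    have "?p < ?q" "?q < length (u @ [Fin j])" "(u @ [Fin j]) ! ?p = Inf j" "(u @ [Fin j]) ! ?q = Fin j"
      using e by (auto simp: nth_append)
    then show False using a unfolding admissible_def by blast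
  qed
  ultimately show ?thesis by (simp add: Yw_def)
qed

lemma adm_InfExt: "admissible n (u @ [Inf j, Ext]) \<Longrightarrow> j \<notin> Xw u"
proof
  assume a: "admissible n (u @ [Inf j, Ext])" and "j \<in> Xw u"
  then obtain x v where e: "u = x @ [Inf j, Ext] @ v" by (auto simp: Xw_def)
  let ?p = "length x" and ?q = "length u" and ?w = "u @ [Inf j, Ext]"
  have "?p < ?q" "?q < length ?w" "?w ! ?p = Inf j" "?w ! ?q = Inf j"
    using e by (auto simp: nth_append)
  then show False using a unfolding admissible_def by blast
qed


fun coordR :: "nat \<Rightarrow> letter list \<Rightarrow> vec \<Rightarrow> vec" where
  "coordR n [] v = v"
| "coordR n (Fin j # r) v =
     (coordR n r v)(j := coordR n r v j + (\<Sum>i\<in>Yw n (rev r) - {j}. coordR n r v i))"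
| "coordR n (Inf j # r) v = coordR n r v"
| "coordR n (Ext # r) v = coordR n r v"

lemma coordR_add: "coordR n r (v + u) = coordR n r v + coordR n r u"
proof (induction r)
  case (Cons a r) then show ?case by (cases a) (auto simp: sum.distrib fun_eq_iff)
qed simp

lemma coordR_uminus: "coordR n r (- v) = - coordR n r v"
proof (induction r)
  case (Cons a r) then show ?case by (cases a) (auto simp: sum_negf fun_eq_iff)
qed simp

lemma coordR_diff: "coordR n r (v - u) = coordR n r v - coordR n r u"
  by (metis coordR_add coordR_uminus diff_conv_add_uminus)

lemma coordR_zero: "coordR n r 0 = 0"
  by (metis add.right_neutral coordR_add add_cancel_right_right)

lemma coordR_smul: "coordR n r (\<lambda>x. k * v x) = (\<lambda>x. k * coordR n r v x)"
proof (induction r)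
  case (Cons a r) then show ?case by (cases a) (auto simp: sum_distrib_left distrib_left fun_eq_iff)
qed simp

lemma sum_unitv: "finite A \<Longrightarrow> (\<Sum>k\<in>A. unitv i k) = (if i \<in> A then 1 else 0)"
  by (simp add: unitv_def sum.delta)

lemma coord_delta: "coordR n r (deltaR n i r) = unitv i"
proof (induction r arbitrary: i)
  case Nil then show ?case by simp
next
  case (Cons a r)
  show ?case
  proof (cases a)
    case (Fin j)
    let ?Y = "Yw n (rev r) - {j}"
    have fY: "finite ?Y" by simp
    show ?thesis
    proof (cases "i \<in> ?Y")
      case True
      then have d: "deltaR n i (Fin j # r) = deltaR n i r - deltaR n j r" by simp
      have h: "coordR n r (deltaR n i (Fin j # r)) = unitv i - unitv j"
        by (simp only: d coordR_diff Cons.IH)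
      have s: "(\<Sum>k\<in>?Y. (unitv i - unitv j) k) = 1" using True fY
        by (simp add: sum_subtractf sum_unitv)
      have "coordR n (Fin j # r) (deltaR n i (Fin j # r)) =
         (unitv i - unitv j)(j := (unitv i - unitv j) j + (\<Sum>k\<in>?Y. (unitv i - unitv j) k))"
        by (simp only: coordR.simps h)
      also have "\<dots> = unitv i" unfolding s using True by (auto simp: fun_eq_iff unitv_def)
      finally show ?thesis using Fin by simp
    next
      case False
      have d: "deltaR n i (Fin j # r) = deltaR n i r" by (simp only: deltaR.simps False if_False)
      have h: "coordR n r (deltaR n i (Fin j # r)) = unitv i"
        by (simp only: d Cons.IH)
      have s: "(\<Sum>k\<in>?Y. unitv i k) = 0" using False fY
        by (simp add: sum_unitv)
      have "coordR n (Fin j # r) (deltaR n i (Fin j # r)) =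
         (unitv i)(j := unitv i j + (\<Sum>k\<in>?Y. unitv i k))"
        by (simp only: coordR.simps h)
      also have "\<dots> = unitv i" unfolding s using False by (auto simp: fun_eq_iff unitv_def)
      finally show ?thesis using Fin by simp
    qed
  qed (simp_all add: Cons.IH)
qed


lemma deltaR_supp:
  "(\<forall>l\<in>set r. letter_ok n l) \<Longrightarrow> i \<in> {1..n} \<Longrightarrow> x \<notin> {1..n} \<Longrightarrow> deltaR n i r x = 0"
proof (induction r arbitrary: i)
  case Nil then show ?case by (auto simp: unitv_def)
next
  case (Cons a r) then show ?case by (cases a) (auto simp: letter_ok_def)
qed

lemma BR_supp:
  "(\<forall>l\<in>set r. letter_ok n l) \<Longrightarrow> b \<in> BR n r \<Longrightarrow> x \<notin> {1..n} \<Longrightarrow> b x = 0"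
proof (induction n r arbitrary: b rule: BR.induct)
  case (2 n j r)
  then show ?case using deltaR_supp[of r n j x] by (auto simp: msum_def letter_ok_def)
next
  case (3 n j r)
  then show ?case using deltaR_supp[of r n j x] by (auto simp: msum_def letter_ok_def)
next
  case (4 n j r)
  then show ?case using deltaR_supp[of r n j x] by (auto simp: msum_def letter_ok_def)
qed auto

lemma recon:
  assumes "\<forall>l\<in>set r. letter_ok n l" and "\<forall>x. x \<notin> {1..n} \<longrightarrow> v x = 0"
  shows "v x = (\<Sum>k\<in>{1..n}. coordR n r v k * deltaR n k r x)"
  using assms(1)
proof (induction r)
  case Nil
  have "(\<Sum>k\<in>{1..n}. v k * unitv k x) = (\<Sum>k\<in>{1..n}. if k = x then v x else 0)"
    by (rule sum.cong) (auto simp: unitv_def)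
  also have "\<dots> = v x" using assms(2) by auto
  finally show ?case by simp
next
  case (Cons a r)
  then have IH: "v x = (\<Sum>k\<in>{1..n}. coordR n r v k * deltaR n k r x)" by simp
  show ?case
  proof (cases a)
    case (Fin j)
    have jn: "j \<in> {1..n}" using Cons.prems Fin by (simp add: letter_ok_def)
    let ?Y = "Yw n (rev r) - {j}"
    let ?c = "coordR n r v"
    let ?S = "\<Sum>i\<in>?Y. ?c i"
    let ?c' = "?c(j := ?c j + ?S)"
    have Yn: "?Y \<subseteq> {1..n}" using Yw_sub by blast
    have t: "?c' k * deltaR n k (Fin j # r) x
        = ?c' k * deltaR n k r x - (if k \<in> ?Y then ?c k * deltaR n j r x else 0)" for k
      by (auto simp: algebra_simps)
    have "(\<Sum>k\<in>{1..n}. ?c' k * deltaR n k (Fin j # r) x)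
        = (\<Sum>k\<in>{1..n}. ?c' k * deltaR n k r x) - (\<Sum>k\<in>{1..n}. if k \<in> ?Y then ?c k * deltaR n j r x else 0)"
      unfolding t by (simp add: sum_subtractf)
    also have "(\<Sum>k\<in>{1..n}. if k \<in> ?Y then ?c k * deltaR n j r x else 0) = ?S * deltaR n j r x"
    proof -
      have "(\<Sum>k\<in>{1..n}. if k \<in> ?Y then ?c k * deltaR n j r x else 0) = (\<Sum>k\<in>{1..n} \<inter> ?Y. ?c k * deltaR n j r x)"
        by (simp add: sum.inter_restrict)
      also have "{1..n} \<inter> ?Y = ?Y" using Yn by blast
      finally show ?thesis by (simp add: sum_distrib_right)
    qed
    also have "(\<Sum>k\<in>{1..n}. ?c' k * deltaR n k r x) = (\<Sum>k\<in>{1..n}. ?c k * deltaR n k r x) + ?S * deltaR n j r x"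
    proof -
      have "(\<Sum>k\<in>{1..n}. ?c' k * deltaR n k r x) = ?c' j * deltaR n j r x + (\<Sum>k\<in>{1..n} - {j}. ?c' k * deltaR n k r x)"
        using jn by (simp add: sum.remove)
      also have "(\<Sum>k\<in>{1..n} - {j}. ?c' k * deltaR n k r x) = (\<Sum>k\<in>{1..n} - {j}. ?c k * deltaR n k r x)"
        by (rule sum.cong) auto
      also have "(\<Sum>k\<in>{1..n}. ?c k * deltaR n k r x) = ?c j * deltaR n j r x + (\<Sum>k\<in>{1..n} - {j}. ?c k * deltaR n k r x)"
        using jn by (simp add: sum.remove)
      ultimately show ?thesis by (simp add: algebra_simps)
    qed
    finally have "(\<Sum>k\<in>{1..n}. ?c' k * deltaR n k (Fin j # r) x) = v x" using IH by simp
    then show ?thesis using Fin by simp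
  qed (use IH in simp_all)
qed

lemma B_inv:
  "admissible n (rev r) \<Longrightarrow> b \<in> BR n r \<Longrightarrow> k \<in> Yw n (rev r) \<Longrightarrow> 0 \<le> coordR n r b k"
proof (induction n r arbitrary: b k rule: BR.induct)
  case (1 n) then show ?case by simp
next
  case (2 n j r)
  have adm: "admissible n (rev r)" using 2(2) adm_prefix by (metis rev.simps(2))
  have jY: "j \<in> Yw n (rev r)" using 2(2) adm_Fin by (metis rev.simps(2))
  have Yeq: "Yw n (rev (Fin j # r)) = Yw n (rev r)" by (simp add: Yw_def)
  from 2(3) obtain b0 d where b: "b = b0 + d" and b0: "b0 \<in> BR n r" and d: "d \<in> {0, deltaR n j r}"
    by (auto simp: msum_def)
  have dj: "deltaR n j (Fin j # r) = deltaR n j r" by simp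
  have cdj: "coordR n (Fin j # r) (deltaR n j r) = unitv j"
    using coord_delta[of n "Fin j # r" j] unfolding dj .
  have cd: "0 \<le> coordR n (Fin j # r) d k"
    using d cdj by (auto simp del: coordR.simps simp: coordR_zero unitv_def)
  let ?c = "coordR n r b0"
  have nn: "\<And>i. i \<in> Yw n (rev r) \<Longrightarrow> 0 \<le> ?c i" using 2(1)[OF adm b0] by blast
  have "0 \<le> coordR n (Fin j # r) b0 k"
  proof (cases "k = j")
    case True
    have "0 \<le> (\<Sum>i\<in>Yw n (rev r) - {j}. ?c i)" using nn by (intro sum_nonneg) auto
    then show ?thesis using True nn[OF jY] by simp
  next
    case False then show ?thesis using nn 2(4) Yeq by simp
  qed
  moreover have "coordR n (Fin j # r) b k = coordR n (Fin j # r) b0 k + coordR n (Fin j # r) d k"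
    by (simp only: b coordR_add plus_fun_apply)
  ultimately show ?case using cd by linarith
next
  case (3 n j r)
  have adm: "admissible n (rev r)" using 3(2) adm_prefix by (metis rev.simps(2))
  have Yeq: "Yw n (rev (Inf j # r)) = Yw n (rev r)" by (simp add: Yw_def)
  from 3(3) obtain b0 m where b: "b = b0 + of_nat m * deltaR n j r" and b0: "b0 \<in> BR n r"
    by (auto simp: msum_def)
  have e: "of_nat m * deltaR n j r = (\<lambda>x. int m * deltaR n j r x)" by (simp add: fun_eq_iff)
  have "coordR n (Inf j # r) (of_nat m * deltaR n j r) k = int m * unitv j k"
    unfolding e by (simp add: coordR_smul coord_delta)
  moreover have "0 \<le> coordR n (Inf j # r) b0 k" using 3(1)[OF adm b0] 3(4) Yeq by simp
  moreover have "coordR n (Inf j # r) b k = coordR n (Inf j # r) b0 k + coordR n (Inf j # r) (of_nat m * deltaR n j r) k"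
    by (simp only: b coordR_add plus_fun_apply)
  ultimately show ?case by (simp add: unitv_def)
next
  case (4 n j r)
  have adm: "admissible n (rev r)" using 4(2) adm_prefix by (metis rev.simps(2) append.assoc append_Cons append_Nil)
  have Yeq: "Yw n (rev (Ext # Inf j # r)) = Yw n (rev r) - {j}" by (auto simp: Yw_def)
  from 4(3) obtain b0 m where b: "b = b0 + of_int m * deltaR n j r" and b0: "b0 \<in> BR n r"
    by (auto simp: msum_def)
  have e: "of_int m * deltaR n j r = (\<lambda>x. m * deltaR n j r x)" by (simp add: fun_eq_iff)
  have "coordR n (Ext # Inf j # r) (of_int m * deltaR n j r) k = m * unitv j k"
    unfolding e by (simp add: coordR_smul coord_delta)
  moreover have "0 \<le> coordR n (Ext # Inf j # r) b0 k" using 4(1)[OF adm b0] 4(4) Yeq by simp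
  moreover have "k \<noteq> j" using 4(4) Yeq by blast
  moreover have "coordR n (Ext # Inf j # r) b k = coordR n (Ext # Inf j # r) b0 k + coordR n (Ext # Inf j # r) (of_int m * deltaR n j r) k"
    by (simp only: b coordR_add plus_fun_apply)
  ultimately show ?case by (simp add: unitv_def)
next
  case ("5_1" n) then show ?case by (simp add: coordR_zero)
next
  case ("5_2" n vb va)
  have adm: "admissible n (rev (Fin vb # va))" using "5_2"(2) adm_prefix by (metis rev.simps(2))
  have "Yw n (rev (Ext # Fin vb # va)) \<subseteq> Yw n (rev (Fin vb # va))"
    using Xw_Ext_sub[of "rev (Fin vb # va)"] by (auto simp: Yw_def)
  then show ?case using "5_2" adm by (metis BR.simps(6) coordR.simps(4) subsetD)
next
  case ("5_3" n va)
  have adm: "admissible n (rev (Ext # va))" using "5_3"(2) adm_prefix by (metis rev.simps(2))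
  have "Yw n (rev (Ext # Ext # va)) \<subseteq> Yw n (rev (Ext # va))"
    using Xw_Ext_sub[of "rev (Ext # va)"] by (auto simp: Yw_def)
  then show ?case using "5_3" adm by (metis BR.simps(7) coordR.simps(4) subsetD)
qed


definition SP :: "nat \<Rightarrow> letter list \<Rightarrow> vec set" where
  "SP n r = {v. \<exists>c :: nat \<Rightarrow> int. v = (\<lambda>x. \<Sum>j\<in>Xw (rev r). c j * deltaR n j r x)}"

lemma SP_cong:
  assumes "Xw (rev r') = Xw (rev r)" and "\<And>k. k \<in> Xw (rev r) \<Longrightarrow> deltaR n k r' = deltaR n k r"
  shows "SP n r' = SP n r"
  unfolding SP_def assms(1) using assms(2) by (simp cong: sum.cong)

lemma Xw_finite: "admissible n w \<Longrightarrow> finite (Xw w)"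
  using Xw_sub finite_subset by blast

lemma V_SP: "admissible n (rev r) \<Longrightarrow> VR n r = SP n r"
proof (induction n r rule: VR.induct)
  case (1 n) then show ?case by (auto simp: SP_def Xw_def)
next
  case (2 n j r)
  have adm: "admissible n (rev r)" using 2(2) adm_prefix by (metis rev.simps(2))
  have "SP n (Fin j # r) = SP n r"
    by (rule SP_cong) (auto simp: Yw_def)
  then show ?case using 2(1)[OF adm] by simp
next
  case (3 n j r)
  have adm: "admissible n (rev r)" using 3(2) adm_prefix by (metis rev.simps(2))
  have "SP n (Inf j # r) = SP n r"
    by (rule SP_cong) auto
  then show ?case using 3(1)[OF adm] by simp
next
  case (4 n j r)
  have a2: "admissible n (rev r @ [Inf j, Ext])" using 4(2) by simp
  have adm: "admissible n (rev r)" using a2 adm_prefix by blast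
  have jX: "j \<notin> Xw (rev r)" using adm_InfExt[OF a2] .
  have fX: "finite (Xw (rev r))" using Xw_finite[OF adm] .
  let ?X = "Xw (rev r)"
  have X': "Xw (rev (Ext # Inf j # r)) = insert j ?X" by simp
  have d': "deltaR n k (Ext # Inf j # r) = deltaR n k r" for k by simp
  have "SP n (Ext # Inf j # r) = msum (SP n r) {of_int m * deltaR n j r | m. True}"
  proof (intro equalityI subsetI)
    fix v assume "v \<in> SP n (Ext # Inf j # r)"
    then obtain c where v: "v = (\<lambda>x. \<Sum>i\<in>insert j ?X. c i * deltaR n i r x)"
      unfolding SP_def X' d' by blast
    have "v = (\<lambda>x. \<Sum>i\<in>?X. c i * deltaR n i r x) + of_int (c j) * deltaR n j r"
      unfolding v using fX jX by (simp add: fun_eq_iff)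
    moreover have "(\<lambda>x. \<Sum>i\<in>?X. c i * deltaR n i r x) \<in> SP n r" unfolding SP_def by blast
    ultimately show "v \<in> msum (SP n r) {of_int m * deltaR n j r | m. True}"
      unfolding msum_def by blast
  next
    fix v assume "v \<in> msum (SP n r) {of_int m * deltaR n j r | m. True}"
    then obtain c m where v: "v = (\<lambda>x. \<Sum>i\<in>?X. c i * deltaR n i r x) + of_int m * deltaR n j r"
      unfolding msum_def SP_def by blast
    let ?c = "c(j := m)"
    have "(\<Sum>i\<in>?X. ?c i * deltaR n i r x) = (\<Sum>i\<in>?X. c i * deltaR n i r x)" for x
      using jX by (intro sum.cong) auto
    then have "v = (\<lambda>x. \<Sum>i\<in>insert j ?X. ?c i * deltaR n i r x)"
      unfolding v using fX jX by (simp add: fun_eq_iff)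
    then show "v \<in> SP n (Ext # Inf j # r)" unfolding SP_def X' d' by blast
  qed
  then show ?case using 4(1)[OF adm] by simp
next
  case ("5_1" n) then show ?case by (auto simp: SP_def Xw_def)
next
  case ("5_2" n vb va)
  have adm: "admissible n (rev (Fin vb # va))" using "5_2"(2) adm_prefix by (metis rev.simps(2))
  have xe: "Xw (rev va @ [Fin vb, Ext]) = Xw (rev va @ [Fin vb])"
    using Xw_snoc[of "rev va @ [Fin vb]" Ext] by simp
  have "SP n (Ext # Fin vb # va) = SP n (Fin vb # va)"
    by (rule SP_cong) (use xe in auto)
  then show ?case using "5_2"(1)[OF adm] by simp
next
  case ("5_3" n va)
  have adm: "admissible n (rev (Ext # va))" using "5_3"(2) adm_prefix by (metis rev.simps(2))
  have xe: "Xw (rev va @ [Ext, Ext]) = Xw (rev va @ [Ext])"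
    using Xw_snoc[of "rev va @ [Ext]" Ext] by simp
  have "SP n (Ext # Ext # va) = SP n (Ext # va)"
    by (rule SP_cong) (use xe in auto)
  then show ?case using "5_3"(1)[OF adm] by simp
qed

lemma VR_BR: "VR n r \<subseteq> BR n r"
proof (induction n r rule: VR.induct)
  case (2 n j r) then show ?case by (force simp: msum_def)
next
  case (3 n j r)
  show ?case
  proof
    fix v assume "v \<in> VR n (Inf j # r)"
    then have "v \<in> BR n r" using 3 by auto
    then have "v + of_nat 0 * deltaR n j r \<in> BR n (Inf j # r)" unfolding BR.simps msum_def by blast
    then show "v \<in> BR n (Inf j # r)" by simp
  qed
next
  case (4 n j r)
  then show ?case unfolding VR.simps BR.simps msum_def by blast
qed auto


theorem mainTheorem12:
  fixes n :: nat and w :: "letter list"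
  assumes "admissible n w"
  shows "V n w = B n w \<inter> Z n w \<and> B n w \<inter> Z n w = spanX n w"
proof -
  define r where "r = rev w"
  have wr: "w = rev r" by (simp add: r_def)
  have adm: "admissible n (rev r)" using assms wr by simp
  have ok: "\<forall>l\<in>set r. letter_ok n l" using adm_ok[OF adm] by simp
  have Vw: "V n w = SP n r" using V_SP[OF adm] by (simp add: V_def r_def[symmetric])
  have spw: "spanX n w = SP n r" by (simp add: spanX_def SP_def delta_def r_def)
  have Bw: "B n w = BR n r" by (simp add: B_def r_def)
  have VB: "V n w \<subseteq> B n w" using VR_BR by (simp add: V_def B_def)
  have neg: "- v \<in> SP n r" if "v \<in> SP n r" for v
  proof -
    from that obtain c where "v = (\<lambda>x. \<Sum>j\<in>Xw (rev r). c j * deltaR n j r x)" by (auto simp: SP_def)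
    then have "- v = (\<lambda>x. \<Sum>j\<in>Xw (rev r). (- c j) * deltaR n j r x)"
      by (simp add: fun_eq_iff sum_negf)
    then show ?thesis unfolding SP_def by (intro CollectI exI[of _ "\<lambda>j. - c j"]) simp
  qed
  have VBZ: "V n w \<subseteq> B n w \<inter> Z n w"
  proof
    fix v assume v: "v \<in> V n w"
    then have "- v \<in> B n w" using neg VB Vw by auto
    then have "v \<in> Z n w" unfolding Z_def by (metis image_eqI minus_minus)
    then show "v \<in> B n w \<inter> Z n w" using v VB by auto
  qed
  have BZS: "B n w \<inter> Z n w \<subseteq> SP n r"
  proof
    fix b assume h: "b \<in> B n w \<inter> Z n w"
    then have b1: "b \<in> BR n r" using Bw by blast
    from h obtain b' where "b' \<in> B n w" "b = - b'" unfolding Z_def by blast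
    then have b2: "- b \<in> BR n r" using Bw by simp
    let ?c = "coordR n r b"
    let ?X = "Xw (rev r)"
    have c0: "?c k = 0" if "k \<in> Yw n (rev r)" for k
    proof -
      have "0 \<le> ?c k" using B_inv[OF adm b1 that] .
      moreover have "0 \<le> coordR n r (- b) k" using B_inv[OF adm b2 that] .
      ultimately show ?thesis by (simp add: coordR_uminus)
    qed
    have supp: "\<forall>x. x \<notin> {1..n} \<longrightarrow> b x = 0" using BR_supp[OF ok b1] by blast
    have Xs: "?X \<subseteq> {1..n}" using Xw_sub[OF adm] .
    have "b x = (\<Sum>k\<in>?X. ?c k * deltaR n k r x)" for x
    proof -
      have "b x = (\<Sum>k\<in>{1..n}. ?c k * deltaR n k r x)" using recon[OF ok supp] .
      also have "\<dots> = (\<Sum>k\<in>?X. ?c k * deltaR n k r x)"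
        by (rule sum.mono_neutral_right) (use Xs c0 in \<open>auto simp: Yw_def\<close>)
      finally show ?thesis .
    qed
    then show "b \<in> SP n r" unfolding SP_def by blast
  qed
  have "V n w = B n w \<inter> Z n w" using VBZ BZS Vw by blast
  moreover have "B n w \<inter> Z n w = spanX n w" using VBZ BZS Vw spw by blast
  ultimately show ?thesis by blast
qed

end
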